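(* Let $\mathbf{G}\in\mathbb{C}^{N_s\times N_t}$, $\mathbf{U}_k\in\mathbb{C}^{N_r\times N_s}$, $\mathbf{D}_k\in\mathbb{C}^{N_r\times N_t}$ for $k=1,\dots,K$, let $\mathbf{W}_k\in\mathbb{C}^{N_t\times N_d}$ be fixed, $\sigma_0^2>0$, and weights $\omega_k$. For $\boldsymbol{\theta}\in\mathbb{C}^{N_s}$ let $\mathbf{H}_k(\boldsymbol{\theta})=\mathbf{D}_k+\mathbf{U}_k\mathrm{diag}(\boldsymbol{\theta})\mathbf{G}$, $\bar{\mathbf{W}}=\sum_{j=1}^K\mathbf{W}_j\mathbf{W}_j^{\mathsf H}$, $\bar{\mathbf{W}}_k=\sum_{j\neq k}\mathbf{W}_j\mathbf{W}_j^{\mathsf H}$, and $$R(\boldsymbol{\theta})=\sum_{k=1}^K\omega_k\Big[\log\det(\sigma_0^2\mathbf{I}+\mathbf{H}_k\bar{\mathbf{W}}\mathbf{H}_k^{\mathsf H})-\log\det(\sigma_0^2\mathbf{I}+\mathbf{H}_k\bar{\mathbf{W}}_k\mathbf{H}_k^{\mathsf H})\Big],$$ with $\mathbf{H}_k=\mathbf{H}_k(\boldsymbol{\theta})$. Then $$\nabla_{\boldsymbol{\theta}}R(\boldsymbol{\theta})=\sum_{k=1}^K\omega_k\Big(\mathrm{vecd}\big(\mathbf{U}_k^{\mathsf H}(\mathbf{H}_k\bar{\mathbf{W}}\mathbf{H}_k^{\mathsf H}+\sigma_0^2\mathbf{I})^{-1}\mathbf{H}_k\bar{\mathbf{W}}\mathbf{G}^{\mathsf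 H}\big)-\mathrm{vecd}\big(\mathbf{U}_k^{\mathsf H}(\mathbf{H}_k\bar{\mathbf{W}}_k\mathbf{H}_k^{\mathsf H}+\sigma_0^2\mathbf{I})^{-1}\mathbf{H}_k\bar{\mathbf{W}}_k\mathbf{G}^{\mathsf H}\big)\Big).$$
   Context: $\mathrm{diag}(\boldsymbol{\theta})$ is the diagonal matrix with diagonal $\boldsymbol{\theta}$; $\mathrm{vecd}(\mathbf{X})$ is the vector of diagonal entries of a square matrix $\mathbf{X}$; $\log$ is the natural logarithm. The complex-valued gradient of a real function $f$ is $\nabla_{\boldsymbol{\theta}}f=\frac12\big(\frac{\partial f}{\partial\Re\{\boldsymbol{\theta}\}}+j\frac{\partial f}{\partial\Im\{\boldsymbol{\theta}\}}\big)$. $R$ is the weighted sum rate of an RIS-aided downlink multiuser MIMO system with RIS phase-shift vector $\boldsymbol{\theta}$ and fixed precoders. *)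

theory Defs
  imports "HOL-Analysis.Analysis"
begin

definition hconj :: "complex^'n^'m \<Rightarrow> complex^'m^'n" where
  "hconj A = (\<chi> i j. cnj (A $ j $ i))"

definition cdiag :: "complex^'n \<Rightarrow> complex^'n^'n" where
  "cdiag \<theta> = (\<chi> i j. if i = j then \<theta> $ i else 0)"

definition vecd :: "complex^'n^'n \<Rightarrow> complex^'n" where
  "vecd X = (\<chi> i. X $ i $ i)"

definition has_complex_gradient ::
  "(complex^'n \<Rightarrow> real) \<Rightarrow> complex^'n \<Rightarrow> complex^'n \<Rightarrow> bool" where
  "has_complex_gradient f g \<theta> \<longleftrightarrow>
     (\<forall>i. \<exists>a b.
        ((\<lambda>t. f (\<theta> + (complex_of_real t) *s axis i 1)) has_real_derivative a) (at 0) \<and>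
        ((\<lambda>t. f (\<theta> + (\<i> * complex_of_real t) *s axis i 1)) has_real_derivative b) (at 0) \<and>
        g $ i = Complex a b / 2)"

definition chan :: "complex^'nt^'nr \<Rightarrow> complex^'ns^'nr \<Rightarrow> complex^'nt^'ns
                     \<Rightarrow> complex^'ns \<Rightarrow> complex^'nt^'nr" where
  "chan D U G \<theta> = D + U ** cdiag \<theta> ** G"

definition Wbar :: "('k::finite \<Rightarrow> complex^'nd^'nt) \<Rightarrow> complex^'nt^'nt" where
  "Wbar W = (\<Sum>j\<in>UNIV. W j ** hconj (W j))"

definition Wbar_ex :: "('k::finite \<Rightarrow> complex^'nd^'nt) \<Rightarrow> 'k \<Rightarrow> complex^'nt^'nt" where
  "Wbar_ex W k = (\<Sum>j\<in>UNIV - {k}. W j ** hconj (W j))"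

text \<open>log det of a Hermitian positive definite matrix (its determinant is a
  positive real number), natural logarithm.\<close>
definition logdet :: "complex^'n^'n \<Rightarrow> real" where
  "logdet M = ln (Re (det M))"

definition wsr :: "('k::finite \<Rightarrow> real) \<Rightarrow> real \<Rightarrow> complex^'nt^'ns
    \<Rightarrow> ('k \<Rightarrow> complex^'ns^'nr) \<Rightarrow> ('k \<Rightarrow> complex^'nt^'nr)
    \<Rightarrow> ('k \<Rightarrow> complex^'nd^'nt) \<Rightarrow> complex^'ns \<Rightarrow> real" where
  "wsr \<omega> \<sigma>2 G U D W \<theta> =
     (\<Sum>k\<in>UNIV. \<omega> k *
        (logdet (mat (complex_of_real \<sigma>2)
                 + chan (D k) (U k) G \<theta> ** Wbar W ** hconj (chan (D k) (U k) G \<theta>))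
       - logdet (mat (complex_of_real \<sigma>2)
                 + chan (D k) (U k) G \<theta> ** Wbar_ex W k ** hconj (chan (D k) (U k) G \<theta>))))"

end

theory Submission
  imports Defs
begin

definition csm :: "complex \<Rightarrow> complex^'n^'m \<Rightarrow> complex^'n^'m" where
  "csm k A = (\<chi> i j. k * A$i$j)"

lemma perm_prod_delta:
  assumes p: "p permutes (UNIV::'n::finite set)"
  shows "(\<Sum>i\<in>UNIV. (X::complex^'n^'n)$i$(p i) * (\<Prod>j\<in>UNIV-{i}. (if j = p j then 1 else 0::complex)))
       = (if p = id then trace X else 0)"
proof (cases "p = id")
  case True
  then show ?thesis by (simp add: trace_def)
next
  case False
  have z: "(\<Prod>j\<in>UNIV-{i}. (if j = p j then 1 else 0::complex)) = 0" for i
  proof -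
    obtain k where k: "p k \<noteq> k" using False by (auto simp: fun_eq_iff)
    show ?thesis
    proof (cases "k = i")
      case False
      then show ?thesis using k by (intro prod_zero) (auto intro!: bexI[of _ k])
    next
      case True
      have "p (p k) \<noteq> p k" using k permutes_inj[OF p] by (metis injD)
      moreover have "p k \<noteq> i" using k True by simp
      ultimately show ?thesis by (intro prod_zero) (auto intro!: bexI[of _ "p k"])
    qed
  qed
  have "(\<Sum>i\<in>UNIV. X$i$(p i) * (\<Prod>j\<in>UNIV-{i}. (if j = p j then 1 else 0::complex))) = 0"
    by (simp only: z mult_zero_right sum.neutral_const)
  then show ?thesis using False by simp
qed

lemma det_deriv_I:
  fixes X Y :: "complex^'n::finite^'n"
  shows "((\<lambda>z. det (mat 1 + csm z X + csm (z^2) Y)) has_field_derivative trace X) (at 0)"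
proof -
  define e where "e = (\<lambda>i j (z::complex). (if i = j then 1 else 0) + z * X$i$j + z^2 * Y$i$j)"
  have ent: "(mat 1 + csm z X + csm (z^2) Y)$i$j = e i j z" for z i j
    by (simp add: csm_def mat_def e_def)
  have de: "(e i j has_field_derivative X$i$j) (at 0)" for i j
    unfolding e_def by (auto intro!: derivative_eq_intros)
  have e0: "e i j 0 = (if i = j then 1 else 0)" for i j by (simp add: e_def)
  have "((\<lambda>z. \<Sum>p\<in>{p. p permutes (UNIV::'n set)}. of_int (sign p) * (\<Prod>i\<in>UNIV. e i (p i) z))
     has_field_derivative (\<Sum>p\<in>{p. p permutes (UNIV::'n set)}. of_int (sign p) *
        (\<Sum>i\<in>UNIV. X$i$(p i) * (\<Prod>j\<in>UNIV-{i}. e j (p j) 0)))) (at 0)"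
    by (intro DERIV_sum DERIV_cmult has_field_derivative_prod de)
  also have "(\<Sum>p\<in>{p. p permutes (UNIV::'n set)}. of_int (sign p) *
        (\<Sum>i\<in>UNIV. X$i$(p i) * (\<Prod>j\<in>UNIV-{i}. e j (p j) 0)))
     = (\<Sum>p\<in>{p. p permutes (UNIV::'n set)}. (if p = id then trace X else 0))"
    by (intro sum.cong refl) (simp add: e0 perm_prod_delta sign_id)
  also have "\<dots> = trace X"
    by (simp add: sum.delta' permutes_id)
  finally show ?thesis unfolding det_def ent .
qed

lemma hconj_hconj[simp]: "hconj (hconj A) = A"
  by (simp add: hconj_def vec_eq_iff)

lemma hconj_mult: "hconj (A ** B) = hconj B ** hconj A"
  by (simp add: hconj_def vec_eq_iff matrix_matrix_mult_def cnj_sum mult.commute)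

lemma hconj_add: "hconj (A + B) = hconj A + hconj B"
  by (simp add: hconj_def vec_eq_iff)

lemma hconj_sum: "hconj (\<Sum>j\<in>S. f j) = (\<Sum>j\<in>S. hconj (f j))"
proof -
  have z: "hconj 0 = 0" by (simp add: hconj_def vec_eq_iff)
  show ?thesis by (induction S rule: infinite_finite_induct) (simp_all add: hconj_add z)
qed

lemma hconj_mat: "hconj (mat c) = mat (cnj c)"
  by (simp add: hconj_def vec_eq_iff mat_def)

lemma hconj_csm: "hconj (csm k A) = csm (cnj k) (hconj A)"
  by (simp add: hconj_def vec_eq_iff csm_def)

lemma trace_hconj: "trace (hconj A) = cnj (trace A)"
  by (simp add: hconj_def trace_def cnj_sum)

lemma det_hconj: "det (hconj A) = cnj (det A)"
proof -
  have "hconj A = transpose (\<chi> i j. cnj (A$i$j))"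
    by (simp add: hconj_def transpose_def vec_eq_iff)
  then have "det (hconj A) = det (\<chi> i j. cnj (A$i$j))" by (simp only: det_transpose)
  also have "\<dots> = cnj (det A)" by (simp add: det_def cnj_sum cnj_prod)
  finally show ?thesis .
qed

lemma csm_mult_left: "csm k A ** B = csm k (A ** B)"
  by (simp add: csm_def vec_eq_iff matrix_matrix_mult_def sum_distrib_left mult.assoc)

lemma csm_mult_right: "A ** csm k B = csm k (A ** B)"
  by (simp add: csm_def vec_eq_iff matrix_matrix_mult_def sum_distrib_left mult.left_commute)

lemma csm_add: "csm k (A + B) = csm k A + csm k B"
  by (simp add: csm_def vec_eq_iff distrib_left)

lemma csm_csm: "csm a (csm b A) = csm (a*b) A"
  by (simp add: csm_def vec_eq_iff mult.assoc)

lemma trace_csm: "trace (csm k A) = k * trace A"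
  by (simp add: csm_def trace_def sum_distrib_left)

lemma cdiag_add: "cdiag (a + b) = cdiag a + cdiag b"
  by (simp add: cdiag_def vec_eq_iff)

lemma cdiag_smult: "cdiag (c *s v) = csm c (cdiag v)"
  by (simp add: cdiag_def csm_def vec_eq_iff)

lemma hconj_cdiag_axis: "hconj (cdiag (axis i 1)) = cdiag (axis i 1)"
  by (simp add: hconj_def cdiag_def vec_eq_iff axis_def)

lemma trace_cdiag_axis: "trace (X ** cdiag (axis i 1)) = X$i$i"
proof -
  have e: "(X ** cdiag (axis i 1))$a$a = (if a = i then X$i$i else 0)" for a
  proof -
    have "(X ** cdiag (axis i 1))$a$a = (\<Sum>k\<in>UNIV. X$a$k * (if k = a then axis i 1 $ k else 0))"
      by (simp add: matrix_matrix_mult_def cdiag_def)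
    also have "\<dots> = X$a$a * axis i 1 $ a"
      by (simp add: if_distrib[of "\<lambda>x. _ * x"] sum.delta' cong: if_cong)
    finally show ?thesis by (simp add: axis_def)
  qed
  show ?thesis by (simp add: trace_def e)
qed

lemma inv_props:
  fixes A :: "'a::semiring_1^'n^'n"
  assumes "invertible A"
  shows "A ** matrix_inv A = mat 1" "matrix_inv A ** A = mat 1"
  using someI_ex[OF assms[unfolded invertible_def]] by (auto simp: matrix_inv_def)

definition cinner :: "complex^'n \<Rightarrow> complex^'n \<Rightarrow> complex" where
  "cinner x y = (\<Sum>i\<in>UNIV. cnj (x$i) * y$i)"

lemma cinner_adj: "cinner x (M *v y) = cinner (hconj M *v x) y"
proof -
  have "cinner x (M *v y) = (\<Sum>i\<in>UNIV. \<Sum>j\<in>UNIV. cnj (x$i) * M$i$j * y$j)"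
    by (simp add: cinner_def matrix_vector_mult_def sum_distrib_left mult.assoc)
  also have "\<dots> = (\<Sum>j\<in>UNIV. \<Sum>i\<in>UNIV. cnj (x$i) * M$i$j * y$j)"
    by (rule sum.swap)
  also have "\<dots> = cinner (hconj M *v x) y"
    by (simp add: cinner_def matrix_vector_mult_def hconj_def cnj_sum sum_distrib_right sum_distrib_left mult_ac)
  finally show ?thesis .
qed

lemma cinner_self_Re: "Re (cinner x x) = (\<Sum>i\<in>UNIV. (Re (x$i))^2 + (Im (x$i))^2)"
  by (simp add: cinner_def Re_sum power2_eq_square)

lemma cinner_self_nonneg: "0 \<le> Re (cinner x x)"
  unfolding cinner_self_Re by (intro sum_nonneg) auto

lemma cinner_self_eq0: "Re (cinner x x) = 0 \<Longrightarrow> x = 0"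
proof -
  assume "Re (cinner x x) = 0"
  then have "\<forall>i\<in>UNIV. (Re (x$i))^2 + (Im (x$i))^2 = 0"
    unfolding cinner_self_Re by (subst (asm) sum_nonneg_eq_0_iff) auto
  then show "x = 0" by (simp add: vec_eq_iff complex_eq_iff add_nonneg_eq_0_iff)
qed

lemma mat_mult_vec: "(mat c :: complex^'n^'n) *v x = c *s x"
proof -
  have "(mat c *v x) $ i = c * x $ i" for i
  proof -
    have "(mat c *v x) $ i = (\<Sum>j\<in>UNIV. (if i = j then c else 0) * x$j)"
      by (simp add: matrix_vector_mult_def mat_def)
    also have "\<dots> = (\<Sum>j\<in>UNIV. (if i = j then c * x$j else 0))"
      by (rule sum.cong) auto
    also have "\<dots> = c * x$i" by (simp add: sum.delta)
    finally show ?thesis .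
  qed
  then show ?thesis by (simp add: vec_eq_iff)
qed

lemma csm_mult_vec: "csm k P *v x = k *s (P *v x)"
  by (simp add: vec_eq_iff matrix_vector_mult_def csm_def sum_distrib_left mult.assoc)

lemma mat_csm_mult_vec: "(mat c + csm k P) *v x = c *s x + k *s (P *v x)"
  by (simp add: matrix_vector_mult_add_rdistrib mat_mult_vec csm_mult_vec)

lemma cinner_add_right: "cinner x (y + z) = cinner x y + cinner x z"
  by (simp add: cinner_def distrib_left sum.distrib)

lemma cinner_smult_right: "cinner x (c *s y) = c * cinner x y"
  by (simp add: cinner_def sum_distrib_left mult_ac)

lemma det_mat_const: "det (mat c :: complex^'n::finite^'n) = c ^ CARD('n)"
  by (subst det_diagonal) (auto simp: mat_def)

lemma det_herm_pos:
  fixes P :: "complex^'n::finite^'n"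
  assumes s0: "\<sigma> > 0" and herm: "hconj P = P"
    and psd: "\<And>x. 0 \<le> Re (cinner x (P *v x))"
  shows "Im (det (mat (complex_of_real \<sigma>) + P)) = 0 \<and> 0 < Re (det (mat (complex_of_real \<sigma>) + P))"
proof -
  define f where "f s = det (mat (complex_of_real \<sigma>) + csm (complex_of_real s) P)" for s
  have im: "Im (f s) = 0" for s
  proof -
    have "hconj (mat (complex_of_real \<sigma>) + csm (complex_of_real s) P) = mat (complex_of_real \<sigma>) + csm (complex_of_real s) P"
      by (simp add: hconj_add hconj_mat hconj_csm herm)
    then have "cnj (f s) = f s" unfolding f_def by (metis det_hconj)
    then show ?thesis by (metis Reals_cnj_iff complex_is_Real_iff)
  qed
  have nz: "f s \<noteq> 0" if "0 \<le> s" for s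
  proof -
    let ?M = "mat (complex_of_real \<sigma>) + csm (complex_of_real s) P"
    have "inj ((*v) ?M)"
    proof (rule injI)
      fix x y assume "?M *v x = ?M *v y"
      then have "?M *v (x - y) = 0"
        by (simp add: vec_eq_iff matrix_vector_mult_def sum_subtractf right_diff_distrib)
      then have "cinner (x - y) (?M *v (x - y)) = 0" by (simp add: cinner_def)
      then have "complex_of_real \<sigma> * cinner (x-y) (x-y) + complex_of_real s * cinner (x-y) (P *v (x-y)) = 0"
        unfolding mat_csm_mult_vec cinner_add_right cinner_smult_right by simp
      from arg_cong[OF this, of Re]
      have "\<sigma> * Re (cinner (x-y) (x-y)) + s * Re (cinner (x-y) (P *v (x-y))) = 0"
        by simp
      moreover have "0 \<le> s * Re (cinner (x-y) (P *v (x-y)))" using that psd by simp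
      moreover have "0 \<le> Re (cinner (x-y) (x-y))" by (rule cinner_self_nonneg)
      ultimately have "Re (cinner (x-y) (x-y)) = 0" using s0
        by (smt (verit) mult_pos_pos)
      then show "x = y" using cinner_self_eq0 by force
    qed
    then show ?thesis unfolding f_def
      using det_nz_iff_inj_gen[OF matrix_vector_mul_linear_gen[of ?M]]
      by (simp add: matrix_of_matrix_vector_mul)
  qed
  have ent: "(mat c + csm k P)$i$j = (if i = j then c else 0) + k * P$i$j" for c k i j
    by (simp add: mat_def csm_def)
  have cont: "isCont (\<lambda>s. Re (f s)) s" for s
    unfolding f_def det_def ent by (intro continuous_Re continuous_intros)
  have f0: "0 < Re (f 0)"
  proof -
    have "f 0 = complex_of_real (\<sigma> ^ CARD('n))"
    proof -
      have "csm 0 P = 0" by (simp add: csm_def vec_eq_iff)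
      then show ?thesis by (simp add: f_def det_mat_const)
    qed
    then show ?thesis using s0 by simp
  qed
  have f1: "f 1 = det (mat (complex_of_real \<sigma>) + P)"
    by (simp add: f_def csm_def)
  have "0 < Re (f 1)"
  proof (rule ccontr)
    assume "\<not> 0 < Re (f 1)"
    then obtain s where "0 \<le> s" "s \<le> 1" "Re (f s) = 0"
      using IVT2[of "\<lambda>s. Re (f s)" 1 0 0] f0 cont by auto
    then show False using nz[of s] im[of s] by (simp add: complex_eq_iff)
  qed
  then show ?thesis using im[of 1] f1 by simp
qed

lemma matrix_add_rdistrib': "(A + B) ** C = A ** C + B ** (C::complex^_^_)"
  by (simp add: vec_eq_iff matrix_matrix_mult_def distrib_right sum.distrib)

lemma sum_mult_vec: "(\<Sum>j\<in>S. M j) *v (y::complex^_) = (\<Sum>j\<in>S. M j *v y)"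
  by (induction S rule: infinite_finite_induct) (simp_all add: matrix_vector_mult_add_rdistrib)

lemma cinner_sum_right: "cinner x (\<Sum>j\<in>S. f j) = (\<Sum>j\<in>S. cinner x (f j))"
proof -
  have z: "cinner x 0 = 0" by (simp add: cinner_def)
  show ?thesis by (induction S rule: infinite_finite_induct) (simp_all add: cinner_add_right z)
qed

lemma psd_HWH:
  fixes H :: "complex^'nt^'nr"
  shows "0 \<le> Re (cinner x ((H ** (\<Sum>j\<in>S. W j ** hconj (W j)) ** hconj H) *v x))"
proof -
  define y where "y = hconj H *v x"
  have "cinner x ((H ** (\<Sum>j\<in>S. W j ** hconj (W j)) ** hconj H) *v x)
        = cinner x (H *v ((\<Sum>j\<in>S. W j ** hconj (W j)) *v y))"
    by (simp add: y_def matrix_vector_mul_assoc matrix_mul_assoc)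
  also have "\<dots> = cinner y ((\<Sum>j\<in>S. W j ** hconj (W j)) *v y)"
    by (simp add: cinner_adj y_def)
  also have "\<dots> = (\<Sum>j\<in>S. cinner (hconj (W j) *v y) (hconj (W j) *v y))"
    by (simp add: sum_mult_vec cinner_sum_right cinner_adj matrix_vector_mul_assoc[symmetric])
  finally show ?thesis
    by (simp add: Re_sum sum_nonneg cinner_self_nonneg)
qed

lemma herm_HWH:
  assumes "hconj Wm = Wm"
  shows "hconj (H ** Wm ** hconj H) = H ** Wm ** hconj H"
  by (simp add: hconj_mult assms matrix_mul_assoc)

lemma herm_Wsum: "hconj (\<Sum>j\<in>S. W j ** hconj (W j)) = (\<Sum>j\<in>S. W j ** hconj (W j))"
  by (simp add: hconj_sum hconj_mult)

lemma hconj_inv_herm: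
  assumes "invertible A" "hconj A = A"
  shows "hconj (matrix_inv A) = matrix_inv A"
proof -
  have "hconj (matrix_inv A) ** A = mat 1"
    using arg_cong[OF inv_props(1)[OF assms(1)], of hconj]
    by (simp add: hconj_mult assms(2) hconj_mat)
  note e1 = this
  have "hconj (matrix_inv A) = hconj (matrix_inv A) ** (A ** matrix_inv A)"
    by (simp add: inv_props[OF assms(1)])
  also have "\<dots> = (hconj (matrix_inv A) ** A) ** matrix_inv A" by (rule matrix_mul_assoc)
  also have "\<dots> = matrix_inv A" by (simp add: e1)
  finally show ?thesis .
qed

lemma chan_dir:
  "chan D U G (\<theta> + (c * t) *s axis i 1)
   = chan D U G \<theta> + csm t (csm c (U ** cdiag (axis i 1) ** G))"
  by (simp add: chan_def cdiag_add cdiag_smult matrix_add_ldistrib matrix_add_rdistrib'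
      csm_mult_left csm_mult_right csm_csm mult.commute)

lemma M_expand:
  assumes "cnj t = t"
  shows "mat s + (H + csm t E) ** Wm ** hconj (H + csm t E)
       = (mat s + H ** Wm ** hconj H) + csm t (E ** Wm ** hconj H + H ** Wm ** hconj E)
         + csm (t^2) (E ** Wm ** hconj E)"
  by (simp add: assms hconj_add hconj_csm matrix_add_ldistrib matrix_add_rdistrib'
      csm_mult_left csm_mult_right csm_csm csm_add power2_eq_square add_ac)

lemma det_factor:
  fixes A :: "complex^'n::finite^'n"
  assumes "invertible A"
  shows "det (A + csm z B + csm (z^2) C)
       = det A * det (mat 1 + csm z (matrix_inv A ** B) + csm (z^2) (matrix_inv A ** C))"
proof -
  have "A ** (mat 1 + csm z (matrix_inv A ** B) + csm (z^2) (matrix_inv A ** C))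
        = A + csm z B + csm (z^2) C"
    by (simp add: matrix_add_ldistrib csm_mult_right matrix_mul_assoc inv_props[OF assms])
  then show ?thesis by (metis det_mul)
qed

lemma det_path_deriv:
  fixes A :: "complex^'n::finite^'n"
  assumes "invertible A"
  shows "((\<lambda>t::real. det (A + csm (complex_of_real t) B + csm ((complex_of_real t)^2) C))
           has_vector_derivative (det A * trace (matrix_inv A ** B))) (at 0)"
proof -
  have "((\<lambda>z. det A * det (mat 1 + csm z (matrix_inv A ** B) + csm (z^2) (matrix_inv A ** C)))
         has_field_derivative det A * trace (matrix_inv A ** B)) (at (of_real 0))"
    using DERIV_cmult[OF det_deriv_I] by simp
  then have "((\<lambda>z. det (A + csm z B + csm (z^2) C))
         has_field_derivative det A * trace (matrix_inv A ** B)) (at (of_real 0))"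
    by (simp add: det_factor[OF assms])
  from has_vector_derivative_real_field[OF this] show ?thesis .
qed

lemma logdet_path_deriv:
  fixes A :: "complex^'n::finite^'n"
  assumes "invertible A" "Im (det A) = 0" "0 < Re (det A)"
  shows "((\<lambda>t::real. logdet (A + csm (complex_of_real t) B + csm ((complex_of_real t)^2) C))
           has_real_derivative Re (trace (matrix_inv A ** B))) (at 0)"
proof -
  let ?Q = "\<lambda>t::real. det (A + csm (complex_of_real t) B + csm ((complex_of_real t)^2) C)"
  let ?d = "det A * trace (matrix_inv A ** B)"
  have "(?Q has_derivative (\<lambda>x. x *\<^sub>R ?d)) (at 0)"
    using det_path_deriv[OF assms(1)] by (simp add: has_vector_derivative_def)
  from has_derivative_Re[OF this]
  have "((\<lambda>t. Re (?Q t)) has_real_derivative Re ?d) (at 0)"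
  proof -
    have eq: "(\<lambda>x. Re (x *\<^sub>R ?d)) = (*) (Re ?d)" by (auto simp: fun_eq_iff)
    show ?thesis using has_derivative_Re[OF \<open>(?Q has_derivative (\<lambda>x. x *\<^sub>R ?d)) (at 0)\<close>]
      unfolding eq has_field_derivative_def .
  qed
  note R = this
  have Q0: "Re (?Q 0) = Re (det A)"
  proof -
    have "csm 0 B = 0" "csm 0 C = 0" by (simp_all add: csm_def vec_eq_iff)
    then show ?thesis by simp
  qed
  have L: "(ln has_real_derivative inverse (Re (det A))) (at ((\<lambda>t. Re (?Q t)) 0))"
    using DERIV_ln[OF assms(3)] Q0 by simp
  have "((\<lambda>t. ln (Re (?Q t))) has_real_derivative inverse (Re (det A)) * Re ?d) (at 0)"
    using DERIV_chain2[OF L R] .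
  moreover have "inverse (Re (det A)) * Re ?d = Re (trace (matrix_inv A ** B))"
  proof -
    have "Re ?d = Re (det A) * Re (trace (matrix_inv A ** B))"
      using assms(2) by simp
    then show ?thesis using assms(3) by (simp add: field_simps)
  qed
  ultimately show ?thesis by (simp add: logdet_def)
qed

lemma trace_identity:
  assumes hA: "hconj Ainv = Ainv" and hW: "hconj Wm = Wm"
  shows "Re (trace (Ainv ** (csm c (U ** cdiag (axis i 1) ** G) ** Wm ** hconj H
                  + H ** Wm ** hconj (csm c (U ** cdiag (axis i 1) ** G)))))
       = 2 * Re (cnj c * (hconj U ** Ainv ** H ** Wm ** hconj G)$i$i)"
proof -
  let ?E = "csm c (U ** cdiag (axis i 1) ** G)"
  let ?X = "hconj U ** Ainv ** H ** Wm ** hconj G"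
  define T where "T = trace (Ainv ** (H ** Wm ** hconj ?E))"
  have hE: "hconj ?E = csm (cnj c) (hconj G ** cdiag (axis i 1) ** hconj U)"
    by (simp add: hconj_csm hconj_mult hconj_cdiag_axis matrix_mul_assoc)
  have "T = cnj c * trace ((Ainv ** H ** Wm ** hconj G ** cdiag (axis i 1)) ** hconj U)"
    by (simp add: T_def hE csm_mult_right trace_csm matrix_mul_assoc)
  also have "\<dots> = cnj c * trace (hconj U ** (Ainv ** H ** Wm ** hconj G ** cdiag (axis i 1)))"
    by (subst trace_mul_sym) (rule refl)
  also have "\<dots> = cnj c * ?X$i$i"
    by (simp add: matrix_mul_assoc trace_cdiag_axis)
  finally have T: "T = cnj c * ?X$i$i" .
  have "hconj (Ainv ** (?E ** Wm ** hconj H)) = (H ** Wm ** hconj ?E) ** Ainv"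
    by (simp add: hconj_mult hA hW matrix_mul_assoc)
  then have "cnj (trace (Ainv ** (?E ** Wm ** hconj H))) = trace ((H ** Wm ** hconj ?E) ** Ainv)"
    by (simp only: trace_hconj[symmetric])
  also have "\<dots> = T" unfolding T_def by (rule trace_mul_sym)
  finally have "cnj (trace (Ainv ** (?E ** Wm ** hconj H))) = T" .
  then have "trace (Ainv ** (?E ** Wm ** hconj H)) = cnj T"
    by (metis complex_cnj_cnj)
  then have "trace (Ainv ** (?E ** Wm ** hconj H + H ** Wm ** hconj ?E)) = cnj T + T"
    by (simp add: matrix_add_ldistrib trace_add T_def)
  then show ?thesis by (simp add: T)
qed

lemma term_deriv:
  fixes G :: "complex^'nt^'ns" and U :: "complex^'ns^'nr" and D :: "complex^'nt^'nr"
    and W :: "'k \<Rightarrow> complex^'nd^'nt"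
  assumes s0: "\<sigma> > 0"
  shows "((\<lambda>t. logdet (mat (complex_of_real \<sigma>)
            + chan D U G (\<theta> + (c * complex_of_real t) *s axis i 1) ** (\<Sum>j\<in>S. W j ** hconj (W j))
              ** hconj (chan D U G (\<theta> + (c * complex_of_real t) *s axis i 1))))
         has_real_derivative
           2 * Re (cnj c * (hconj U ** matrix_inv (chan D U G \<theta> ** (\<Sum>j\<in>S. W j ** hconj (W j))
              ** hconj (chan D U G \<theta>) + mat (complex_of_real \<sigma>))
              ** chan D U G \<theta> ** (\<Sum>j\<in>S. W j ** hconj (W j)) ** hconj G)$i$i)) (at 0)"
proof -
  define Wm where "Wm = (\<Sum>j\<in>S. W j ** hconj (W j))"
  define H where "H = chan D U G \<theta>"
  define E where "E = csm c (U ** cdiag (axis i 1) ** G)"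
  define A where "A = mat (complex_of_real \<sigma>) + H ** Wm ** hconj H"
  define B where "B = E ** Wm ** hconj H + H ** Wm ** hconj E"
  define C where "C = E ** Wm ** hconj E"
  have hW: "hconj Wm = Wm" unfolding Wm_def by (rule herm_Wsum)
  have fun_eq: "(\<lambda>t. logdet (mat (complex_of_real \<sigma>)
            + chan D U G (\<theta> + (c * complex_of_real t) *s axis i 1) ** Wm
              ** hconj (chan D U G (\<theta> + (c * complex_of_real t) *s axis i 1))))
      = (\<lambda>t. logdet (A + csm (complex_of_real t) B + csm ((complex_of_real t)^2) C))"
  proof
    fix t
    show "logdet (mat (complex_of_real \<sigma>)
            + chan D U G (\<theta> + (c * complex_of_real t) *s axis i 1) ** Wm
              ** hconj (chan D U G (\<theta> + (c * complex_of_real t) *s axis i 1)))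
        = logdet (A + csm (complex_of_real t) B + csm ((complex_of_real t)^2) C)"
      unfolding chan_dir H_def[symmetric] E_def[symmetric] A_def B_def C_def
      by (subst M_expand) simp_all
  qed
  have pos: "Im (det A) = 0 \<and> 0 < Re (det A)"
    unfolding A_def
    by (rule det_herm_pos[OF s0 herm_HWH[OF hW]]) (unfold Wm_def, rule psd_HWH)
  have inv: "invertible A"
    using pos invertible_det_nz[of A] by auto
  have hA: "hconj A = A"
    unfolding A_def by (simp add: hconj_add hconj_mat herm_HWH[OF hW])
  have "((\<lambda>t. logdet (A + csm (complex_of_real t) B + csm ((complex_of_real t)^2) C))
         has_real_derivative Re (trace (matrix_inv A ** B))) (at 0)"
    using logdet_path_deriv[OF inv] pos by blast
  moreover have "Re (trace (matrix_inv A ** B))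
      = 2 * Re (cnj c * (hconj U ** matrix_inv A ** H ** Wm ** hconj G)$i$i)"
    unfolding B_def E_def by (rule trace_identity[OF hconj_inv_herm[OF inv hA] hW])
  moreover have "matrix_inv (H ** Wm ** hconj H + mat (complex_of_real \<sigma>)) = matrix_inv A"
    by (simp add: A_def add.commute)
  ultimately show ?thesis
    using fun_eq unfolding Wm_def H_def by simp
qed

theorem theorem3:
  fixes G :: "complex^'nt^'ns"
    and U :: "'k::finite \<Rightarrow> complex^'ns^'nr"
    and D :: "'k \<Rightarrow> complex^'nt^'nr"
    and W :: "'k \<Rightarrow> complex^'nd^'nt"
    and \<omega> :: "'k \<Rightarrow> real"
    and \<sigma>2 :: real
    and \<theta> :: "complex^'ns"
  assumes "\<sigma>2 > 0"
  shows "has_complex_gradient (wsr \<omega> \<sigma>2 G U D W)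
     (\<Sum>k\<in>UNIV. complex_of_real (\<omega> k) *s
        (vecd (hconj (U k)
               ** matrix_inv (chan (D k) (U k) G \<theta> ** Wbar W ** hconj (chan (D k) (U k) G \<theta>)
                              + mat (complex_of_real \<sigma>2))
               ** chan (D k) (U k) G \<theta> ** Wbar W ** hconj G)
       - vecd (hconj (U k)
               ** matrix_inv (chan (D k) (U k) G \<theta> ** Wbar_ex W k ** hconj (chan (D k) (U k) G \<theta>)
                              + mat (complex_of_real \<sigma>2))
               ** chan (D k) (U k) G \<theta> ** Wbar_ex W k ** hconj G)))
     \<theta>"
  unfolding has_complex_gradient_def
proof
  fix i
  define X1 where "X1 k = (hconj (U k)
               ** matrix_inv (chan (D k) (U k) G \<theta> ** Wbar W ** hconj (chan (D k) (U k) G \<theta>)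
                              + mat (complex_of_real \<sigma>2))
               ** chan (D k) (U k) G \<theta> ** Wbar W ** hconj G)$i$i" for k
  define X2 where "X2 k = (hconj (U k)
               ** matrix_inv (chan (D k) (U k) G \<theta> ** Wbar_ex W k ** hconj (chan (D k) (U k) G \<theta>)
                              + mat (complex_of_real \<sigma>2))
               ** chan (D k) (U k) G \<theta> ** Wbar_ex W k ** hconj G)$i$i" for k
  have dir: "((\<lambda>t. wsr \<omega> \<sigma>2 G U D W (\<theta> + (c * complex_of_real t) *s axis i 1)) has_real_derivative
      (\<Sum>k\<in>UNIV. \<omega> k * (2 * Re (cnj c * X1 k) - 2 * Re (cnj c * X2 k)))) (at 0)" for c
    unfolding wsr_def X1_def X2_def Wbar_def Wbar_ex_def
    by (intro DERIV_sum DERIV_cmult DERIV_diff term_deriv assms)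
  have d1: "((\<lambda>t. wsr \<omega> \<sigma>2 G U D W (\<theta> + complex_of_real t *s axis i 1)) has_real_derivative
      (\<Sum>k\<in>UNIV. \<omega> k * (2 * Re (X1 k) - 2 * Re (X2 k)))) (at 0)"
    using dir[of 1] by simp
  have d2: "((\<lambda>t. wsr \<omega> \<sigma>2 G U D W (\<theta> + (\<i> * complex_of_real t) *s axis i 1)) has_real_derivative
      (\<Sum>k\<in>UNIV. \<omega> k * (2 * Im (X1 k) - 2 * Im (X2 k)))) (at 0)"
    using dir[of "\<i>"] by simp
  have comp: "(\<Sum>k\<in>UNIV. complex_of_real (\<omega> k) *s
        (vecd (hconj (U k)
               ** matrix_inv (chan (D k) (U k) G \<theta> ** Wbar W ** hconj (chan (D k) (U k) G \<theta>)
                              + mat (complex_of_real \<sigma>2))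
               ** chan (D k) (U k) G \<theta> ** Wbar W ** hconj G)
       - vecd (hconj (U k)
               ** matrix_inv (chan (D k) (U k) G \<theta> ** Wbar_ex W k ** hconj (chan (D k) (U k) G \<theta>)
                              + mat (complex_of_real \<sigma>2))
               ** chan (D k) (U k) G \<theta> ** Wbar_ex W k ** hconj G))) $ i
      = (\<Sum>k\<in>UNIV. complex_of_real (\<omega> k) * (X1 k - X2 k))"
    by (simp add: sum_component vecd_def X1_def X2_def right_diff_distrib)
  show "\<exists>a b. ((\<lambda>t. wsr \<omega> \<sigma>2 G U D W (\<theta> + complex_of_real t *s axis i 1)) has_real_derivative a) (at 0) \<and>
         ((\<lambda>t. wsr \<omega> \<sigma>2 G U D W (\<theta> + (\<i> * complex_of_real t) *s axis i 1)) has_real_derivative b) (at 0) \<and>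
         (\<Sum>k\<in>UNIV. complex_of_real (\<omega> k) *s
        (vecd (hconj (U k)
               ** matrix_inv (chan (D k) (U k) G \<theta> ** Wbar W ** hconj (chan (D k) (U k) G \<theta>)
                              + mat (complex_of_real \<sigma>2))
               ** chan (D k) (U k) G \<theta> ** Wbar W ** hconj G)
       - vecd (hconj (U k)
               ** matrix_inv (chan (D k) (U k) G \<theta> ** Wbar_ex W k ** hconj (chan (D k) (U k) G \<theta>)
                              + mat (complex_of_real \<sigma>2))
               ** chan (D k) (U k) G \<theta> ** Wbar_ex W k ** hconj G))) $ i
         = Complex a b / 2"
    apply (rule exI, rule exI, intro conjI, rule d1, rule d2)
    unfolding comp
    by (simp add: complex_eq_iff Re_sum Im_sum sum_distrib_left algebra_simps)
qed

end
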